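(* Let $b \geq 2$ be an integer and let $A_b \subseteq \mathbb{N}$ be the set of all natural numbers whose base-$b$ representation begins with the digit $1$. Then $A_b$ is fractionally dense if $b \in \{2,3,4\}$, and $A_b$ is not fractionally dense if $b \geq 5$.
   Context: $\mathbb{N} = \{1,2,3,\ldots\}$. For $A \subseteq \mathbb{N}$, the quotient set is $R(A) = \{a/a' : a, a' \in A\}$. A set $A \subseteq \mathbb{N}$ is called fractionally dense if the closure of $R(A)$ in $\mathbb{R}$ equals $[0,\infty)$. *)

theory Defs
  imports "HOL-Analysis.Analysis"
begin

definition ratio_set :: "nat set \<Rightarrow> real set" where
  "ratio_set A = {real a / real a' | a a'. a \<in> A \<and> a' \<in> A}"

definition fractionally_dense :: "nat set \<Rightarrow> bool" where
  "fractionally_dense A \<longleftrightarrow> closure (ratio_set A) = {0..}"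

definition leading_digit :: "nat \<Rightarrow> nat \<Rightarrow> nat" where
  "leading_digit b n = n div b ^ (THE k. b ^ k \<le> n \<and> n < b ^ Suc k)"

definition A_set :: "nat \<Rightarrow> nat set" where
  "A_set b = {n. n \<ge> 1 \<and> leading_digit b n = 1}"

end

theory Submission
  imports Defs
begin

lemma k_unique:
  fixes b n k j :: nat
  assumes "b \<ge> 2" "b^k \<le> n" "n < b^Suc k" "b^j \<le> n" "n < b^Suc j"
  shows "k = j"
proof -
  have "b^k < b^Suc j" using assms by linarith
  hence "k < Suc j" using assms(1) power_strict_increasing_iff[of b k "Suc j"] by simp
  moreover have "b^j < b^Suc k" using assms by linarith
  hence "j < Suc k" using assms(1) power_strict_increasing_iff[of b j "Suc k"] by simp
  ultimately show ?thesis by simp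
qed

lemma ld_eq:
  fixes b n k :: nat
  assumes "b \<ge> 2" "b^k \<le> n" "n < b^Suc k"
  shows "leading_digit b n = n div b^k"
proof -
  have "(THE k. b ^ k \<le> n \<and> n < b ^ Suc k) = k"
    using assms k_unique[OF assms(1)] by (intro the_equality) auto
  thus ?thesis unfolding leading_digit_def by simp
qed

lemma k_exists:
  fixes b n :: nat
  assumes "b \<ge> 2" "n \<ge> 1"
  shows "\<exists>k. b^k \<le> n \<and> n < b^Suc k"
proof -
  have "n < 2^n" by (rule less_exp)
  also have "\<dots> \<le> b^n" using assms(1) by (simp add: power_mono)
  also have "\<dots> \<le> b^Suc n" using assms(1) by simp
  finally have ex: "\<exists>k. n < b^Suc k" by blast
  define k where "k = (LEAST k. n < b^Suc k)"
  have k1: "n < b^Suc k" unfolding k_def using ex by (rule LeastI_ex)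
  have "b^k \<le> n"
  proof (cases k)
    case 0 thus ?thesis using assms by simp
  next
    case (Suc m)
    have "m < k" using Suc by simp
    hence "\<not> n < b^Suc m" unfolding k_def using not_less_Least by blast
    thus ?thesis using Suc by simp
  qed
  thus ?thesis using k1 by blast
qed

lemma A_iff:
  fixes b n :: nat
  assumes "b \<ge> 2"
  shows "n \<in> A_set b \<longleftrightarrow> (\<exists>k. b^k \<le> n \<and> n < 2*b^k)"
proof
  assume "n \<in> A_set b"
  hence n1: "n \<ge> 1" and ld: "leading_digit b n = 1" unfolding A_set_def by auto
  obtain k where k: "b^k \<le> n" "n < b^Suc k" using k_exists[OF assms n1] by blast
  have "n div b^k = 1" using ld ld_eq[OF assms k] by simp
  moreover have "n = b^k * (n div b^k) + n mod b^k" by simp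
  moreover have "n mod b^k < b^k" using assms by simp
  ultimately have "n = b^k + n mod b^k" by simp
  with \<open>n mod b^k < b^k\<close> have "n < 2*b^k" by linarith
  thus "\<exists>k. b^k \<le> n \<and> n < 2*b^k" using k by blast
next
  assume "\<exists>k. b^k \<le> n \<and> n < 2*b^k"
  then obtain k where k: "b^k \<le> n" "n < 2*b^k" by blast
  have pos: "b^k > 0" using assms by simp
  have "2*b^k \<le> b*b^k" using assms by (intro mult_right_mono) auto
  hence "n < b*b^k" using k by linarith
  hence "n < b^Suc k" by simp
  hence "leading_digit b n = n div b^k" using ld_eq[OF assms k(1)] by simp
  also have "\<dots> = 1"
  proof -
    have "b^k div b^k \<le> n div b^k" using k by (intro div_le_mono)
    hence "1 \<le> n div b^k" using pos by simp
    moreover have "n div b^k < 2" using k pos by (simp add: div_less_iff_less_mult)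
    ultimately show ?thesis by simp
  qed
  finally show "n \<in> A_set b" unfolding A_set_def using k pos by auto
qed


lemma ratio_mem: "a \<in> A \<Longrightarrow> a' \<in> A \<Longrightarrow> real a / real a' \<in> ratio_set A"
  unfolding ratio_set_def by blast

lemma ratio_nonneg: "ratio_set A \<subseteq> {0..}"
  unfolding ratio_set_def by auto

lemma ratio_gap:
  fixes b :: nat
  assumes b: "b \<ge> 2" and r: "r \<in> ratio_set (A_set b)"
  shows "r \<le> 2 \<or> r \<ge> real b / 2"
proof -
  obtain a a' where r': "r = real a / real a'" "a \<in> A_set b" "a' \<in> A_set b"
    using r unfolding ratio_set_def by blast
  obtain m where m: "b^m \<le> a" "a < 2*b^m" using A_iff[OF b] r' by blast
  obtain n where n: "b^n \<le> a'" "a' < 2*b^n" using A_iff[OF b] r' by blast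
  have a'pos: "real a' > 0" using n b
    by (metis less_le_trans of_nat_0_less_iff power_not_zero zero_less_iff_neq_zero not_numeral_le_zero)
  show ?thesis
  proof (cases "m \<le> n")
    case True
    have "b^m \<le> b^n" using True b by (simp add: power_increasing)
    hence "a < 2*a'" using m n by linarith
    hence "real a \<le> 2 * real a'" by linarith
    hence "r \<le> 2" using r' pos_divide_le_eq[OF a'pos] by simp
    thus ?thesis by simp
  next
    case False
    have "b^Suc n \<le> b^m" using False b by (intro power_increasing) auto
    hence "b*b^n \<le> a" using m by simp
    moreover have "b*a' \<le> b*(2*b^n)" using n by simp
    ultimately have "b*a' \<le> 2*a" by linarith
    hence "real b * real a' \<le> 2 * real a" by (metis of_nat_le_iff of_nat_mult of_nat_numeral)
    hence "real b / 2 \<le> real a / real a'" using pos_le_divide_eq[OF a'pos] by simp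
    hence "r \<ge> real b / 2" using r' by simp
    thus ?thesis by simp
  qed
qed

lemma not_dense:
  fixes b :: nat
  assumes b: "b \<ge> 5"
  shows "\<not> fractionally_dense (A_set b)"
proof
  assume d: "fractionally_dense (A_set b)"
  have "ratio_set (A_set b) \<subseteq> {..2} \<union> {real b/2..}"
    using ratio_gap[of b] b by fastforce
  hence "closure (ratio_set (A_set b)) \<subseteq> {..2} \<union> {real b/2..}"
    by (intro closure_minimal) (auto intro: closed_Un)
  moreover have "(9/4::real) \<in> closure (ratio_set (A_set b))"
    using d unfolding fractionally_dense_def by simp
  moreover have "real b / 2 > 9/4" using b by simp
  ultimately show False by auto
qed


lemma S_inv:
  fixes b :: nat
  assumes x: "x \<in> closure (ratio_set (A_set b))" "x \<noteq> 0"
  shows "inverse x \<in> closure (ratio_set (A_set b))"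
proof -
  obtain f where f: "\<forall>n. f n \<in> ratio_set (A_set b)" "f \<longlonglongrightarrow> x"
    using closure_sequential[THEN iffD1, OF x(1)] by blast
  have "\<forall>n. inverse (f n) \<in> ratio_set (A_set b)"
  proof
    fix n
    obtain a a' where "f n = real a / real a'" "a \<in> A_set b" "a' \<in> A_set b"
      using f(1) unfolding ratio_set_def by blast
    thus "inverse (f n) \<in> ratio_set (A_set b)" by (simp add: ratio_mem)
  qed
  moreover have "(\<lambda>n. inverse (f n)) \<longlonglongrightarrow> inverse x"
    using f(2) x(2) by (rule tendsto_inverse)
  ultimately show ?thesis unfolding closure_sequential by (intro exI[of _ "\<lambda>n. inverse (f n)"]) blast
qed

lemma S_scale:
  fixes b :: nat
  assumes b: "b \<ge> 2" and x: "x \<in> closure (ratio_set (A_set b))"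
  shows "real b * x \<in> closure (ratio_set (A_set b))"
proof -
  obtain f where f: "\<forall>n. f n \<in> ratio_set (A_set b)" "f \<longlonglongrightarrow> x"
    using closure_sequential[THEN iffD1, OF x] by blast
  have "\<forall>n. real b * f n \<in> ratio_set (A_set b)"
  proof
    fix n
    obtain a a' where aa: "f n = real a / real a'" "a \<in> A_set b" "a' \<in> A_set b"
      using f(1) unfolding ratio_set_def by blast
    obtain k where k: "b^k \<le> a" "a < 2*b^k" using A_iff[OF b] aa by blast
    have "b^Suc k \<le> b*a" "b*a < 2*b^Suc k" using k b by auto
    hence "b*a \<in> A_set b" using A_iff[OF b] by blast
    thus "real b * f n \<in> ratio_set (A_set b)" using aa ratio_mem[of "b*a" _ a'] by simp
  qed
  moreover have "(\<lambda>n. real b * f n) \<longlonglongrightarrow> real b * x"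
    using f(2) by (intro tendsto_mult tendsto_const)
  ultimately show ?thesis unfolding closure_sequential by (intro exI[of _ "\<lambda>n. real b * f n"]) blast
qed

lemma S_12:
  fixes b :: nat
  assumes b: "b \<ge> 2" and y: "1 \<le> y" "y < 2"
  shows "y \<in> closure (ratio_set (A_set b))"
  unfolding closure_approachable
proof (intro allI impI)
  fix e :: real assume e: "e > 0"
  obtain n :: nat where n: "n > 0" "inverse (real n) < e"
    using ex_inverse_of_nat_less[OF e] by blast
  define B where "B = real (b^n)"
  have nB: "n < b^n"
  proof -
    have "n < 2^n" by (rule less_exp)
    also have "\<dots> \<le> b^n" using b by (simp add: power_mono)
    finally show ?thesis .
  qed
  have Bpos: "B > 0" unfolding B_def using b by simp
  have Bn: "real n < B" unfolding B_def using nB by linarith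
  define N where "N = nat \<lfloor>y*B\<rfloor>"
  have yB: "y*B \<ge> B" using y Bpos by simp
  have fpos: "\<lfloor>y*B\<rfloor> \<ge> 0" using yB Bpos by simp
  have rN: "real N = real_of_int \<lfloor>y*B\<rfloor>" unfolding N_def using fpos by simp
  have fl: "real N \<le> y*B" "y*B < real N + 1" unfolding rN by linarith+
  have "b^n \<le> N"
  proof -
    have "real (b^n) \<le> y*B" using yB B_def by simp
    hence "int (b^n) \<le> \<lfloor>y*B\<rfloor>" by (simp add: le_floor_iff)
    thus ?thesis unfolding N_def by (metis nat_int nat_mono of_nat_power)
  qed
  moreover have "N < 2*b^n"
  proof -
    have "y*B < 2*B" using y Bpos by simp
    hence "real N < real (2*b^n)" using fl B_def by simp
    thus ?thesis by linarith
  qed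
  ultimately have NA: "N \<in> A_set b" using A_iff[OF b] by blast
  have BA: "b^n \<in> A_set b" using A_iff[OF b] b by fastforce
  have mem: "real N / B \<in> ratio_set (A_set b)" using ratio_mem[OF NA BA] B_def by simp
  have "real N / B \<le> y" using fl Bpos by (simp add: divide_le_eq)
  moreover have "y - real N / B < 1 / B"
  proof -
    have "y*B - real N < 1" using fl by simp
    hence "(y*B - real N)/B < 1/B" using Bpos by (simp add: divide_strict_right_mono)
    thus ?thesis using Bpos by (simp add: diff_divide_distrib)
  qed
  moreover have "1/B < e"
  proof -
    have "1/B < 1/real n" using Bn n(1) by (simp add: frac_less2)
    thus ?thesis using n(2) by (simp add: inverse_eq_divide)
  qed
  ultimately have "dist (real N / B) y < e" by (simp add: dist_real_def)
  thus "\<exists>z\<in>ratio_set (A_set b). dist z y < e" using mem by blast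
qed


lemma dense_small:
  fixes b :: nat
  assumes b: "b \<ge> 2" "b \<le> 4"
  shows "fractionally_dense (A_set b)"
proof -
  define S where "S = closure (ratio_set (A_set b))"
  have clS: "closed S" unfolding S_def by simp
  have "{1..<2::real} \<subseteq> S" unfolding S_def using S_12[OF b(1)] by auto
  hence "closure {1..<2::real} \<subseteq> S" using clS by (rule closure_minimal)
  hence I12: "{1..2::real} \<subseteq> S" by simp
  have Ih: "{1/2..2::real} \<subseteq> S"
  proof
    fix x :: real assume x: "x \<in> {1/2..2}"
    show "x \<in> S"
    proof (cases "x \<ge> 1")
      case True thus ?thesis using x I12 by auto
    next
      case False
      have "inverse x \<in> {1..2}" using x False
        by (auto simp: field_simps)
      hence "inverse x \<in> S" using I12 by auto
      moreover have "inverse x \<noteq> 0" using x by auto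
      ultimately have "inverse (inverse x) \<in> S" unfolding S_def
        using S_inv[of "inverse x" b] by blast
      thus ?thesis by simp
    qed
  qed
  have ind: "\<forall>x::real. 1/2 \<le> x \<and> x \<le> 2 * real b ^ k \<longrightarrow> x \<in> S" for k
  proof (induction k)
    case 0 thus ?case using Ih by auto
  next
    case (Suc k)
    show ?case
    proof (intro allI impI)
      fix x :: real assume x: "1/2 \<le> x \<and> x \<le> 2 * real b ^ Suc k"
      show "x \<in> S"
      proof (cases "x \<le> 2 * real b ^ k")
        case True thus ?thesis using Suc x by blast
      next
        case False
        have bpos: "real b > 0" using b by simp
        have bk: "real b ^ k \<ge> 1" using b by simp
        have "x / real b \<ge> 1/2"
        proof -
          have "x \<ge> 2" using False bk by linarith
          hence "x \<ge> real b / 2" using b by simp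
          thus ?thesis using bpos by (simp add: field_simps)
        qed
        moreover have "x / real b \<le> 2 * real b ^ k" using x bpos
          by (simp add: field_simps)
        ultimately have "x / real b \<in> S" using Suc by blast
        hence "real b * (x / real b) \<in> S" unfolding S_def using S_scale[OF b(1)] by blast
        thus ?thesis using bpos by simp
      qed
    qed
  qed
  have big: "x \<in> S" if "x \<ge> 1/2" for x :: real
  proof -
    define k where "k = nat \<lceil>x\<rceil>"
    have "x \<le> real k" unfolding k_def by linarith
    also have "real k < real (2^k)" by (simp only: of_nat_less_iff) (rule less_exp)
    also have "real (2^k) \<le> real b ^ k" using b by (simp add: power_mono)
    also have "\<dots> \<le> 2 * real b ^ k" by simp
    finally show ?thesis using ind[of k] that by auto
  qed
  have pos: "{0<..} \<subseteq> S"
  proof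
    fix x :: real assume x: "x \<in> {0<..}"
    show "x \<in> S"
    proof (cases "x \<ge> 1/2")
      case True thus ?thesis using big by blast
    next
      case False
      have "inverse x \<ge> 1/2" using x False by (auto simp: field_simps)
      hence "inverse x \<in> S" using big by blast
      moreover have "inverse x \<noteq> 0" using x by auto
      ultimately have "inverse (inverse x) \<in> S" unfolding S_def
        using S_inv[of "inverse x" b] by blast
      thus ?thesis by simp
    qed
  qed
  hence "closure ({0<..} :: real set) \<subseteq> S" using clS by (rule closure_minimal)
  hence "({0..} :: real set) \<subseteq> S" by simp
  moreover have "S \<subseteq> {0..}" unfolding S_def using ratio_nonneg
    by (intro closure_minimal) auto
  ultimately show ?thesis unfolding fractionally_dense_def S_def by blast
qed

theorem mainTheorem1:
  fixes b :: nat
  assumes "b \<ge> 2"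
  shows "(b \<in> {2, 3, 4} \<longrightarrow> fractionally_dense (A_set b)) \<and>
         (b \<ge> 5 \<longrightarrow> \<not> fractionally_dense (A_set b))"
  using dense_small[OF assms] not_dense by auto

end
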